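(* Consider the problem described in the context and let $\mathbf{x}_0=(x_0,y_0)\notin\Omega_{\rm capture}$. Let $T_{\min}(\mathbf{x}_0)=\arg\min_{T>0} d_f^*(T,\mathbf{x}_0)$. Then $$T_{\min}(\mathbf{x}_0)=\begin{cases}x_0-\frac{\mu}{\sqrt{1-\mu^2}}y_0, & \text{if } x_0-\frac{\mu}{\sqrt{1-\mu^2}}y_0>0,\\ 0, & \text{otherwise},\end{cases}$$ and consequently $$d_f^*(T_{\min},\mathbf{x}_0)=\begin{cases}\mu x_0+\sqrt{1-\mu^2}\,y_0, & \text{if } T_{\min}(\mathbf{x}_0)>0,\\ \|\mathbf{x}_0\|, & \text{otherwise}.\end{cases}$$
   Context: Pursuer-fixed frame: the Evader's relative position $\mathbf{x}(t)=(x(t),y(t))\in\mathbb{R}^2$ evolves as $\dot x=\mu\cos\psi(t)-1$, $\dot y=\mu\sin\psi(t)$, $\mathbf{x}(0)=\mathbf{x}_0$, $\|\mathbf{x}_0\|>1$, $\mu\in(0,1)$, $\psi(t)$ the Evader's heading. The constraint is $\|\mathbf{x}(t)\|\ge1$ on $[0,T]$. For a final time $T$, $d_f^*(T,\mathbf{x}_0)$ denotes the maximal final distance $\|\mathbf{x}(T)\|$ achievable by the Evader subject to the constraint (its best response). For $T>0$, $\Omega(T)$ is the set of $\mathbf{x}_0$ with $(x_0-T)^2+y_0^2<(1-\mu T)^2$, $\mu x_0+\sqrt{1-\mu^2}y_0<1$ and $x_0>\mu$, and $\Omega_{\rm capture}=\bigcup_{T\ge0}\Omega(T)$ (the set of initial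 positions from which, for some final time, capture, i.e. entering $\|\mathbf{x}\|<1$, is unavoidable). The paper assumes $y\ge0$ throughout. *)

theory Defs
  imports "HOL-Analysis.Analysis"
begin

text \<open>Evader relative position in the pursuer-fixed frame under heading control psi:
  x(t) = x0 + int_0^t (mu cos psi - 1), y(t) = y0 + int_0^t mu sin psi.\<close>
definition traj_x :: "real \<Rightarrow> (real \<Rightarrow> real) \<Rightarrow> real \<Rightarrow> real \<Rightarrow> real" where
  "traj_x mu psi x0 t = x0 + integral {0..t} (\<lambda>s. mu * cos (psi s) - 1)"

definition traj_y :: "real \<Rightarrow> (real \<Rightarrow> real) \<Rightarrow> real \<Rightarrow> real \<Rightarrow> real" where
  "traj_y mu psi y0 t = y0 + integral {0..t} (\<lambda>s. mu * sin (psi s))"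

definition traj_dist :: "real \<Rightarrow> (real \<Rightarrow> real) \<Rightarrow> real \<Rightarrow> real \<Rightarrow> real \<Rightarrow> real" where
  "traj_dist mu psi x0 y0 t = sqrt ((traj_x mu psi x0 t)\<^sup>2 + (traj_y mu psi y0 t)\<^sup>2)"

definition admissible :: "real \<Rightarrow> real \<Rightarrow> real \<Rightarrow> real \<Rightarrow> (real \<Rightarrow> real) \<Rightarrow> bool" where
  "admissible mu T x0 y0 psi \<longleftrightarrow>
     psi \<in> borel_measurable lborel \<and> (\<forall>t\<in>{0..T}. traj_dist mu psi x0 y0 t \<ge> 1)"

definition dfstar :: "real \<Rightarrow> real \<Rightarrow> real \<Rightarrow> real \<Rightarrow> real" where
  "dfstar mu T x0 y0 = Sup {traj_dist mu psi x0 y0 T | psi. admissible mu T x0 y0 psi}"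

definition Omega :: "real \<Rightarrow> real \<Rightarrow> (real \<times> real) set" where
  "Omega mu T = {(x0, y0). (x0 - T)\<^sup>2 + y0\<^sup>2 < (1 - mu * T)\<^sup>2
                      \<and> mu * x0 + sqrt (1 - mu\<^sup>2) * y0 < 1 \<and> x0 > mu}"

definition Omega_capture :: "real \<Rightarrow> (real \<times> real) set" where
  "Omega_capture mu = (\<Union>T\<in>{0..}. Omega mu T)"

end

theory Submission
  imports Defs
begin

lemma meas: assumes "psi \<in> borel_measurable lborel" shows "psi \<in> borel_measurable (lebesgue_on {0..(t::real)})"
  using assms by (simp add: measurable_completion measurable_restrict_space1)

lemma intcos: assumes "psi \<in> borel_measurable lborel" shows "(\<lambda>s. cos (psi s :: real)) integrable_on {0..(t::real)}"
proof (rule measurable_bounded_by_integrable_imp_integrable_real[of "\<lambda>s. cos (psi s)" "{0..t}" "\<lambda>_. 1"])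
  show "(\<lambda>s. cos (psi s)) \<in> borel_measurable (lebesgue_on {0..t})"
    using meas[OF assms] by measurable
qed auto

lemma intsin: assumes "psi \<in> borel_measurable lborel" shows "(\<lambda>s. sin (psi s :: real)) integrable_on {0..(t::real)}"
proof (rule measurable_bounded_by_integrable_imp_integrable_real[of "\<lambda>s. sin (psi s)" "{0..t}" "\<lambda>_. 1"])
  show "(\<lambda>s. sin (psi s)) \<in> borel_measurable (lebesgue_on {0..t})"
    using meas[OF assms] by measurable
qed auto

lemma cs: "(A::real) * cos x + B * sin x \<le> sqrt (A^2+B^2)"
proof -
  have "(A * cos x + B * sin x)^2 + (A * sin x - B * cos x)^2 = A^2+B^2"
  proof -
    have "(A * cos x + B * sin x)^2 + (A * sin x - B * cos x)^2 = A^2*((sin x)^2+(cos x)^2) + B^2*((sin x)^2+(cos x)^2)"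
      by algebra
    then show ?thesis by (simp only: sin_cos_squared_add mult_1_right)
  qed
  then have "(A * cos x + B * sin x)^2 \<le> A^2+B^2" by (metis le_add_same_cancel1 zero_le_power2)
  then show ?thesis by (rule real_le_rsqrt)
qed

lemma const_dist:
  assumes "(t::real) \<ge> 0"
  shows "traj_dist mu (\<lambda>_. th) x0 y0 t = sqrt ((x0 + t*(mu * cos th - 1))^2 + (y0 + t*(mu * sin th))^2)"
  using assms by (simp add: traj_dist_def traj_x_def traj_y_def content_real algebra_simps)

lemma upper:
  assumes psi: "psi \<in> borel_measurable lborel" and T: "(T::real) \<ge> 0" and mu: "mu \<ge> 0"
  shows "traj_dist mu psi x0 y0 T \<le> sqrt ((x0-T)^2+y0^2) + mu*T"
proof -
  define A where "A = integral {0..T} (\<lambda>s. cos (psi s))"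
  define B where "B = integral {0..T} (\<lambda>s. sin (psi s))"
  have ic: "(\<lambda>s. cos (psi s)) integrable_on {0..T}" using intcos[OF psi] .
  have is': "(\<lambda>s. sin (psi s)) integrable_on {0..T}" using intsin[OF psi] .
  have tx: "traj_x mu psi x0 T = (x0 - T) + mu * A"
  proof -
    have "integral {0..T} (\<lambda>s. mu * cos (psi s) - 1) = integral {0..T} (\<lambda>s. mu * cos (psi s)) - integral {0..T} (\<lambda>s. 1)"
      by (rule integral_diff) (auto intro: ic integrable_on_mult_right)
    also have "\<dots> = mu * A - T" using T by (simp add: A_def content_real)
    finally show ?thesis by (simp add: traj_x_def)
  qed
  have ty: "traj_y mu psi y0 T = y0 + mu * B"
    by (simp add: traj_y_def B_def)
  define N where "N = sqrt (A^2+B^2)"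
  have N0: "N \<ge> 0" by (simp add: N_def)
  have NT: "N \<le> T"
  proof (cases "N = 0")
    case True then show ?thesis using T by simp
  next
    case False
    then have Np: "N > 0" using N0 by simp
    have "N * N = A * A + B * B" by (simp add: N_def power2_eq_square[symmetric])
    also have "\<dots> = integral {0..T} (\<lambda>s. A * cos (psi s) + B * sin (psi s))"
      using ic is' by (simp add: A_def B_def integral_add integrable_on_mult_right)
    also have "\<dots> \<le> integral {0..T} (\<lambda>s. N)"
      by (rule integral_le) (auto intro!: integrable_add integrable_on_mult_right ic is' simp: N_def cs)
    also have "\<dots> = N * T" using T by (simp add: content_real)
    finally show ?thesis using Np by simp
  qed
  have "traj_dist mu psi x0 y0 T = cmod (Complex (x0 - T) y0 + complex_of_real mu * Complex A B)"
  proof -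
    have "Complex (x0 - T) y0 + complex_of_real mu * Complex A B = Complex (x0 - T + mu*A) (y0 + mu*B)"
      by (simp add: complex_eq_iff)
    then show ?thesis by (simp add: traj_dist_def tx ty complex_norm)
  qed
  also have "\<dots> \<le> cmod (Complex (x0 - T) y0) + mu * cmod (Complex A B)"
    by (metis mu norm_mult norm_of_real norm_triangle_ineq abs_of_nonneg)
  also have "\<dots> = sqrt ((x0-T)^2+y0^2) + mu * N" by (simp add: complex_norm N_def)
  also have "\<dots> \<le> sqrt ((x0-T)^2+y0^2) + mu*T" using NT mu by (simp add: mult_left_mono)
  finally show ?thesis .
qed

lemma le_dfstar:
  assumes "admissible mu T x0 y0 psi" "T \<ge> 0" "mu \<ge> 0"
  shows "traj_dist mu psi x0 y0 T \<le> dfstar mu T x0 y0"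
  unfolding dfstar_def
proof (rule cSup_upper)
  show "traj_dist mu psi x0 y0 T \<in> {traj_dist mu psi x0 y0 T |psi. admissible mu T x0 y0 psi}"
    using assms by blast
  show "bdd_above {traj_dist mu psi x0 y0 T |psi. admissible mu T x0 y0 psi}"
    unfolding bdd_above_def using upper assms admissible_def by blast
qed

lemma dfstar_le:
  assumes "admissible mu T x0 y0 psi0" "T \<ge> 0" "mu \<ge> 0"
    and "\<And>psi. admissible mu T x0 y0 psi \<Longrightarrow> traj_dist mu psi x0 y0 T \<le> M"
  shows "dfstar mu T x0 y0 \<le> M"
  unfolding dfstar_def
  by (rule cSup_least) (use assms in auto)

theorem lemma7:
  fixes mu x0 y0 Tmin :: real
  assumes mu: "0 < mu" "mu < 1"
    and y0: "y0 \<ge> 0"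
    and outside: "sqrt (x0\<^sup>2 + y0\<^sup>2) > 1"
    and notcap: "(x0, y0) \<notin> Omega_capture mu"
    and Tmin_def: "Tmin = (if x0 - mu / sqrt (1 - mu\<^sup>2) * y0 > 0
                           then x0 - mu / sqrt (1 - mu\<^sup>2) * y0 else 0)"
  shows "(\<forall>T\<ge>0. dfstar mu Tmin x0 y0 \<le> dfstar mu T x0 y0)
       \<and> dfstar mu Tmin x0 y0 =
           (if Tmin > 0 then mu * x0 + sqrt (1 - mu\<^sup>2) * y0 else sqrt (x0\<^sup>2 + y0\<^sup>2))"
proof -
  define s where "s = sqrt (1 - mu\<^sup>2)"
  define L where "L = mu * x0 + s * y0"
  define R where "R = sqrt (x0\<^sup>2 + y0\<^sup>2)"
  have mm: "mu * mu < mu * 1" using mu by (intro mult_strict_left_mono) auto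
  have mu2: "mu\<^sup>2 < 1" using mm mu unfolding power2_eq_square by linarith
  have s0: "s > 0" using mu2 by (simp add: s_def)
  have s2: "s\<^sup>2 = 1 - mu\<^sup>2" unfolding s_def
    by (rule real_sqrt_pow2) (use mu2 in simp)
  have R1: "R > 1" using outside by (simp add: R_def)
  have R2: "R\<^sup>2 = x0\<^sup>2 + y0\<^sup>2" unfolding R_def by simp
  have mu0: "mu \<ge> 0" using mu by simp
  show ?thesis
  proof (cases "x0 - mu / s * y0 > 0")
    case True
    have Tm: "Tmin = x0 - mu / s * y0" using True by (simp add: Tmin_def s_def)
    have Tpos: "Tmin > 0" using True Tm by simp
    have key: "x0 * s > mu * y0"
    proof -
      have "(x0 - mu / s * y0) * s > 0" using True s0 by simp
      then show ?thesis using s0 by (simp add: algebra_simps)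
    qed
    have x0pos: "x0 > 0"
    proof -
      have "mu * y0 \<ge> 0" using mu0 y0 by simp
      then have "x0 * s > 0" using key by linarith
      then show ?thesis using s0 by (simp add: zero_less_mult_iff)
    qed
    have x0mu: "x0 > mu"
    proof -
      have "(mu * y0)\<^sup>2 < (x0 * s)\<^sup>2"
        using key mu0 y0 by (intro power_strict_mono) auto
      then have "mu\<^sup>2 * y0\<^sup>2 < x0\<^sup>2 * (1 - mu\<^sup>2)" by (simp add: power_mult_distrib s2)
      then have "mu\<^sup>2 * R\<^sup>2 < x0\<^sup>2" by (simp add: R2 algebra_simps)
      moreover have "mu\<^sup>2 * 1 \<le> mu\<^sup>2 * R\<^sup>2"
        using R1 by (intro mult_left_mono) (auto simp: power_mono less_imp_le)
      ultimately have "mu\<^sup>2 < x0\<^sup>2" by simp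
      then show ?thesis using x0pos mu0 by (simp add: power_less_imp_less_base)
    qed
    define r where "r = y0 / s"
    have r0: "r \<ge> 0" using y0 s0 by (simp add: r_def)
    have rsq: "(x0 - Tmin)\<^sup>2 + y0\<^sup>2 = r\<^sup>2"
    proof -
      have "(x0 - Tmin)\<^sup>2 + y0\<^sup>2 = y0\<^sup>2 * (mu\<^sup>2 + s\<^sup>2) / s\<^sup>2"
        using s0 by (simp add: Tm field_simps power2_eq_square)
      also have "\<dots> = r\<^sup>2" by (simp add: s2 r_def power_divide)
      finally show ?thesis .
    qed
    have rsqrt: "sqrt ((x0 - Tmin)\<^sup>2 + y0\<^sup>2) = r" using rsq r0 by simp
    have rL: "r + mu * Tmin = L"
    proof -
      have "r + mu * Tmin = mu * x0 + y0 * (1 - mu\<^sup>2) / s"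
        using s0 by (simp add: r_def Tm field_simps power2_eq_square)
      also have "\<dots> = mu * x0 + y0 * (s * s) / s" using s2 by (simp add: power2_eq_square)
      also have "\<dots> = mu * x0 + y0 * s" using s0 by simp
      finally show ?thesis by (simp add: L_def mult.commute)
    qed
    have L1: "L \<ge> 1"
    proof (rule ccontr)
      assume "\<not> L \<ge> 1"
      then have Ll: "L < 1" by simp
      have "r < 1 - mu * Tmin" using rL Ll by linarith
      then have "r\<^sup>2 < (1 - mu * Tmin)\<^sup>2" using r0 by (intro power_strict_mono) auto
      then have "(x0, y0) \<in> Omega mu Tmin"
        unfolding Omega_def using rsq Ll x0mu by (simp add: L_def s_def)
      then have "(x0, y0) \<in> Omega_capture mu"
        unfolding Omega_capture_def using Tpos by auto
      then show False using notcap by simp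
    qed
    define thu where "thu = arccos mu"
    have cu: "cos thu = mu" using mu by (simp add: thu_def)
    have su: "sin thu = s" using mu by (simp add: thu_def s_def sin_arccos)
    have ulow: "traj_dist mu (\<lambda>_. thu) x0 y0 t \<ge> L" if t: "t \<ge> 0" for t
    proof -
      define X where "X = x0 + t * (mu * cos thu - 1)"
      define Y where "Y = y0 + t * (mu * sin thu)"
      have "X * cos thu + Y * sin thu = L + t * mu * (mu\<^sup>2 - 1 + s\<^sup>2)"
        by (simp add: X_def Y_def cu su L_def algebra_simps power2_eq_square)
      also have "\<dots> = L" by (simp add: s2)
      finally have "X * cos thu + Y * sin thu = L" .
      moreover have "X * cos thu + Y * sin thu \<le> sqrt (X\<^sup>2 + Y\<^sup>2)" by (rule cs)
      ultimately show ?thesis using const_dist[OF t] by (simp add: X_def Y_def)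
    qed
    have uadm: "admissible mu T x0 y0 (\<lambda>_. thu)" for T
      unfolding admissible_def using ulow L1 by force
    have dT: "dfstar mu Tmin x0 y0 = L"
    proof (rule antisym)
      show "dfstar mu Tmin x0 y0 \<le> L"
        by (rule dfstar_le[OF uadm]) (use Tpos mu0 upper rsqrt rL admissible_def in \<open>auto\<close>)
      show "L \<le> dfstar mu Tmin x0 y0"
        using ulow[of Tmin] le_dfstar[OF uadm, of Tmin] Tpos mu0 by linarith
    qed
    have "dfstar mu Tmin x0 y0 \<le> dfstar mu T x0 y0" if T: "T \<ge> 0" for T
      using dT ulow[OF T] le_dfstar[OF uadm T mu0] by linarith
    then show ?thesis using dT Tpos by (simp add: L_def s_def)
  next
    case False
    have Tm: "Tmin = 0" using False by (simp add: Tmin_def s_def)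
    have muR: "x0 \<le> mu * R"
    proof (cases "x0 \<le> 0")
      case True then show ?thesis using mu R1 by (smt (verit) mult_pos_pos)
    next
      case False
      then have x0p: "x0 > 0" by simp
      have "x0 * s \<le> mu * y0"
      proof -
        have "(x0 - mu / s * y0) * s \<le> 0" using \<open>\<not> x0 - mu / s * y0 > 0\<close> s0
          by (simp add: mult_nonpos_nonneg)
        then show ?thesis using s0 by (simp add: algebra_simps)
      qed
      then have "(x0 * s)\<^sup>2 \<le> (mu * y0)\<^sup>2" using x0p s0 by (intro power_mono) auto
      then have "x0\<^sup>2 * (1 - mu\<^sup>2) \<le> mu\<^sup>2 * y0\<^sup>2" by (simp add: power_mult_distrib s2)
      then have "x0\<^sup>2 \<le> (mu * R)\<^sup>2" by (simp add: power_mult_distrib R2 algebra_simps)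
      moreover have "0 \<le> mu * R" using mu0 R1 by simp
      ultimately show ?thesis by (rule power2_le_imp_le)
    qed
    have Rp: "R > 0" using R1 by simp
    have xR: "\<bar>x0 / R\<bar> \<le> 1"
    proof -
      have "x0\<^sup>2 \<le> R\<^sup>2" using R2 by simp
      then have "\<bar>x0\<bar> \<le> R" using Rp by (metis abs_le_square_iff abs_of_pos)
      then show ?thesis using Rp by simp
    qed
    define th where "th = arccos (x0 / R)"
    have c0: "cos th = x0 / R" unfolding th_def by (rule cos_arccos_abs[OF xR])
    have s0': "sin th = y0 / R"
    proof -
      have "sin th = sqrt (1 - (x0/R)\<^sup>2)" unfolding th_def by (rule sin_arccos_abs[OF xR])
      also have "1 - (x0/R)\<^sup>2 = (y0/R)\<^sup>2"
      proof -
        have "(x0/R)^2 + (y0/R)^2 = (x0^2+y0^2)/R^2" by (simp add: power_divide add_divide_distrib)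
        also have "\<dots> = 1" unfolding R2[symmetric] using Rp by simp
        finally show ?thesis by simp
      qed
      also have "sqrt ((y0/R)\<^sup>2) = y0 / R" using y0 Rp by (metis real_sqrt_abs abs_of_nonneg divide_nonneg_pos)
      finally show ?thesis .
    qed
    have low: "traj_dist mu (\<lambda>_. th) x0 y0 t \<ge> R" if t: "t \<ge> 0" for t
    proof -
      define X where "X = x0 + t * (mu * cos th - 1)"
      define Y where "Y = y0 + t * (mu * sin th)"
      have "X\<^sup>2 + Y\<^sup>2 = (x0\<^sup>2 + y0\<^sup>2) + 2 * t * (mu * (x0\<^sup>2 + y0\<^sup>2) / R - x0)
               + t\<^sup>2 * ((mu * x0 / R - 1)\<^sup>2 + (mu * y0 / R)\<^sup>2)"
        using Rp by (simp add: X_def Y_def c0 s0' power2_eq_square field_simps)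
      also have "mu * (x0\<^sup>2 + y0\<^sup>2) / R = mu * R"
      proof -
        have e: "x0^2+y0^2 = R*R" using R2 by (simp add: power2_eq_square)
        show ?thesis unfolding e using Rp by simp
      qed
      finally have "X\<^sup>2 + Y\<^sup>2 \<ge> R\<^sup>2" using t muR R2
        by (smt (verit) mult_nonneg_nonneg zero_le_power2)
      then have "sqrt (X\<^sup>2 + Y\<^sup>2) \<ge> R" using Rp by (simp add: real_le_rsqrt)
      then show ?thesis using const_dist[OF t] by (simp add: X_def Y_def)
    qed
    have adm: "admissible mu T x0 y0 (\<lambda>_. th)" for T
      unfolding admissible_def using low R1 by force
    have d0: "traj_dist mu psi x0 y0 0 = R" for psi
      by (simp add: traj_dist_def traj_x_def traj_y_def R_def)
    have dT: "dfstar mu 0 x0 y0 = R"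
    proof (rule antisym)
      show "dfstar mu 0 x0 y0 \<le> R"
        by (rule dfstar_le[OF adm]) (use mu0 d0 in auto)
      show "R \<le> dfstar mu 0 x0 y0"
        using d0 le_dfstar[OF adm, of 0] mu0 by simp
    qed
    have "dfstar mu 0 x0 y0 \<le> dfstar mu T x0 y0" if T: "T \<ge> 0" for T
      using dT low[OF T] le_dfstar[OF adm T mu0] by linarith
    then show ?thesis using dT Tm by (simp add: R_def)
  qed
qed

end
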